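(* Let $D$ be an $\ell$-dimensional simplex and $\mathcal{F}$ a nonempty collection of faces of $D$, with $m=\#\mathcal{F}$. Then: (i) the union $\mathcal{P}=\bigcup_{F\in\mathcal{F}}F$ is a simplicial complex inside $D$, and the number of $k$-facets of $D$ contained in $\mathcal{P}$ is $\sum_{r=1}^m(-1)^{r-1}\binom{\ell+1-r}{k+1}\binom{m}{r}$; (ii) letting $\mathcal{C}$ be the set of facets of $D$ not contained in $\mathcal{P}$: (ii.1) every facet in $\mathcal{C}$ has codimension at most $\ell+1-m$; (ii.2) the number of facets in $\mathcal{C}$ of codimension $j$ is $\binom{\ell+1-m}{j}$; (ii.3) the total number of facets in $\mathcal{C}$ is $2^{\ell+1-m}$.
   Context: An $\ell$-simplex $D$ is the convex hull of $\ell+1$ affinely independent points (its vertices). For a nonempty subset $K$ of the vertices with $k+1$ elements, the convex hull of $K$ is a $k$-facet of $D$ (so $D$ itself is its unique $\ell$-facet). A face of $D$ is an $(\ell-1)$-facet. Codimension of a $k$-facet is $\ell-k$. *)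

theory Defs
  imports "HOL-Analysis.Analysis"
begin

definition is_facet :: "'a::euclidean_space set \<Rightarrow> nat \<Rightarrow> 'a set \<Rightarrow> bool" where
  "is_facet V k S \<longleftrightarrow> (\<exists>K. K \<subseteq> V \<and> card K = k + 1 \<and> S = convex hull K)"

definition is_face :: "'a::euclidean_space set \<Rightarrow> 'a set \<Rightarrow> bool" where
  "is_face V F \<longleftrightarrow> (\<exists>v\<in>V. F = convex hull (V - {v}))"

end

theory Submission
  imports Defs
begin

lemma int_card_UNION_indexed:
  assumes "finite A" "\<And>a. a \<in> A \<Longrightarrow> finite (X a)"
  shows "int (card (\<Union>(X ` A))) = (\<Sum>B | B \<subseteq> A \<and> B \<noteq> {}. (- 1) ^ (card B + 1) * int (card (\<Inter>(X ` B))))"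
proof -
  interpret Incl_Excl finite "int o card"
  proof qed (auto simp add: card_Un_disjnt)
  show ?thesis
    using restricted_indexed[of A X] assms by auto
qed

lemma hull_inj:
  fixes V :: "'a::euclidean_space set"
  assumes "\<not> affine_dependent V" "K \<subseteq> V" "K' \<subseteq> V" "convex hull K = convex hull K'"
  shows "K = K'"
proof -
  have "\<not> affine_dependent K" "\<not> affine_dependent K'"
    using assms affine_dependent_subset by blast+
  then have "K = {x. x extreme_point_of convex hull K}" "K' = {x. x extreme_point_of convex hull K'}"
    by (simp_all add: extreme_point_of_convex_hull_affine_independent)
  then show ?thesis
    using assms(4) by metis
qed

lemma hull_sub:
  fixes V :: "'a::euclidean_space set"
  assumes "\<not> affine_dependent V" "K \<subseteq> V" "K' \<subseteq> V"
  shows "convex hull K \<subseteq> convex hull K' \<longleftrightarrow> K \<subseteq> K'"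
proof
  assume h: "convex hull K \<subseteq> convex hull K'"
  have "\<not> affine_dependent (K \<union> K')"
    using assms affine_dependent_subset by (metis Un_subset_iff)
  then have "convex hull (K \<inter> K') = convex hull K"
    using convex_hull_Int h by blast
  then have "K \<inter> K' = K"
    using hull_inj[OF assms(1)] assms by blast
  then show "K \<subseteq> K'" by blast
qed (simp add: hull_mono)

lemma sum_by_card:
  fixes g :: "nat \<Rightarrow> int"
  assumes "finite W"
  shows "(\<Sum>I | I \<subseteq> W \<and> I \<noteq> {}. g (card I)) = (\<Sum>r=1..card W. int (card W choose r) * g r)"
proof -
  have fin: "finite {I. I \<subseteq> W \<and> I \<noteq> {}}"
    by (simp add: assms)
  have "\<And>k. \<lbrakk>Suc 0 \<le> k; k \<le> card W\<rbrakk> \<Longrightarrow> \<exists>B\<subseteq>W. B \<noteq> {} \<and> k = card B"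
    by (metis (mono_tags, lifting) Suc_le_D Zero_neq_Suc card_eq_0_iff obtain_subset_with_card_n)
  with \<open>finite W\<close> finite_subset
  have card_eq: "card ` {I. I \<subseteq> W \<and> I \<noteq> {}} = {1..card W}"
    using not_less_eq_eq card_mono by (fastforce simp: image_iff)
  have "(\<Sum>I | I \<subseteq> W \<and> I \<noteq> {}. g (card I))
      = (\<Sum>r = 1..card W. \<Sum>I\<in>{x. x \<subseteq> W \<and> x \<noteq> {} \<and> card x = r}. g r)"
    by (simp add: sum.image_gen [OF fin, where g=card] card_eq)
  also have "\<dots> = (\<Sum>r=1..card W. int (card W choose r) * g r)"
  proof (rule sum.cong[OF refl])
    fix r assume "r \<in> {1..card W}"
    then have "{x. x \<subseteq> W \<and> x \<noteq> {} \<and> card x = r} = {x. x \<subseteq> W \<and> card x = r}" by auto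
    then show "(\<Sum>I\<in>{x. x \<subseteq> W \<and> x \<noteq> {} \<and> card x = r}. g r) = int (card W choose r) * g r"
      using n_subsets[OF assms, of r] by simp
  qed
  finally show ?thesis .
qed

lemma supset_card:
  assumes "finite V" "W \<subseteq> V"
  shows "card {K. W \<subseteq> K \<and> K \<subseteq> V \<and> Q (card K)} = card {L. L \<subseteq> V - W \<and> Q (card W + card L)}"
proof -
  have inj: "inj_on (\<lambda>L. W \<union> L) {L. L \<subseteq> V - W \<and> Q (card W + card L)}"
    by (rule inj_onI) blast
  have "{K. W \<subseteq> K \<and> K \<subseteq> V \<and> Q (card K)} = (\<lambda>L. W \<union> L) ` {L. L \<subseteq> V - W \<and> Q (card W + card L)}"
  proof (rule set_eqI, rule iffI)
    fix K assume "K \<in> {K. W \<subseteq> K \<and> K \<subseteq> V \<and> Q (card K)}"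
    then have K: "W \<subseteq> K" "K \<subseteq> V" "Q (card K)" by auto
    have fK: "finite K" using K assms finite_subset by blast
    have "card (K - W) = card K - card W" using K fK card_Diff_subset finite_subset by blast
    moreover have "card W \<le> card K" using K fK card_mono by blast
    ultimately have "card K = card W + card (K - W)" by simp
    then show "K \<in> (\<lambda>L. W \<union> L) ` {L. L \<subseteq> V - W \<and> Q (card W + card L)}"
      using K by (intro image_eqI[where x="K - W"]) auto
  next
    fix K assume "K \<in> (\<lambda>L. W \<union> L) ` {L. L \<subseteq> V - W \<and> Q (card W + card L)}"
    then obtain L where L: "L \<subseteq> V - W" "Q (card W + card L)" "K = W \<union> L" by blast
    have "card (W \<union> L) = card W + card L"
      using L assms by (intro card_Un_disjoint) (auto intro: finite_subset)
    then show "K \<in> {K. W \<subseteq> K \<and> K \<subseteq> V \<and> Q (card K)}" using L assms by auto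
  qed
  then show ?thesis using card_image[OF inj] by simp
qed

theorem lemma2p1:
  fixes V :: "'a::euclidean_space set" and l m :: nat and \<F> :: "'a set set"
  assumes indep: "\<not> affine_dependent V"
    and cardV: "card V = l + 1"
    and ne: "\<F> \<noteq> {}"
    and faces: "\<forall>F\<in>\<F>. is_face V F"
    and m: "card \<F> = m"
  defines "P \<equiv> \<Union>\<F>"
  defines "\<C> \<equiv> {S. (\<exists>k. is_facet V k S) \<and> \<not> S \<subseteq> P}"
  shows "simplicial_complex {S. \<exists>K. K \<subseteq> V \<and> S = convex hull K \<and> S \<subseteq> P}
         \<and> \<Union>{S. \<exists>K. K \<subseteq> V \<and> S = convex hull K \<and> S \<subseteq> P} = P
         \<and> (\<forall>k. int (card {S. is_facet V k S \<and> S \<subseteq> P}) =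
               (\<Sum>r=1..m. (-1)^(r-1) * int ((l + 1 - r) choose (k + 1)) * int (m choose r)))
         \<and> (\<forall>S\<in>\<C>. \<forall>k. is_facet V k S \<longrightarrow> l - k \<le> l + 1 - m)
         \<and> (\<forall>j. card {S\<in>\<C>. \<exists>k. is_facet V k S \<and> k + j = l} = (l + 1 - m) choose j)
         \<and> card \<C> = 2 ^ (l + 1 - m)"
proof -
  have finV: "finite V" using indep aff_independent_finite by blast
  define W where "W = {v\<in>V. convex hull (V - {v}) \<in> \<F>}"
  have FW: "\<F> = (\<lambda>v. convex hull (V-{v})) ` W"
    using faces unfolding is_face_def W_def by auto
  have injW: "inj_on (\<lambda>v. convex hull (V-{v})) V"
  proof (rule inj_onI)
    fix v w assume vw: "v \<in> V" "w \<in> V" "convex hull (V-{v}) = convex hull (V-{w})"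
    then have "V-{v} = V-{w}" using hull_inj[OF indep] by blast
    then show "v = w" using vw by blast
  qed
  have WV: "W \<subseteq> V" by (auto simp: W_def)
  have cardW: "card W = m" using m FW card_image injW WV inj_on_subset by metis
  have Wne: "W \<noteq> {}" using ne FW by auto
  have finW: "finite W" using finV WV finite_subset by blast
  have PW: "P = (\<Union>w\<in>W. convex hull (V-{w}))" using P_def FW by auto
  have key: "convex hull K \<subseteq> P \<longleftrightarrow> (K = {} \<or> \<not> W \<subseteq> K)" if KV: "K \<subseteq> V" for K
  proof
    assume h: "convex hull K \<subseteq> P"
    show "K = {} \<or> \<not> W \<subseteq> K"
    proof (rule ccontr)
      assume "\<not> (K = {} \<or> \<not> W \<subseteq> K)"
      then have Kne: "K \<noteq> {}" and WK: "W \<subseteq> K" by auto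
      have "rel_interior (convex hull K) \<noteq> {}" using Kne by (simp add: rel_interior_eq_empty)
      then obtain x where x: "x \<in> rel_interior (convex hull K)" by blast
      then have "x \<in> P" using h rel_interior_subset by blast
      then obtain w where w: "w \<in> W" "x \<in> convex hull (V-{w})" using PW by blast
      have "convex hull (V-{w}) face_of convex hull V"
        using face_of_convex_hull_affine_independent[OF indep] by blast
      moreover have "convex hull K \<subseteq> convex hull V" using KV hull_mono by blast
      ultimately have "convex hull K \<subseteq> convex hull (V-{w})" using subset_of_face_of x w by blast
      then have "K \<subseteq> V - {w}" using hull_sub[OF indep KV] by blast
      then show False using w WK by blast
    qed
  next
    assume "K = {} \<or> \<not> W \<subseteq> K"
    then show "convex hull K \<subseteq> P"
    proof
      assume "K = {}" then show ?thesis by simp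
    next
      assume "\<not> W \<subseteq> K" then obtain w where w: "w \<in> W" "w \<notin> K" by blast
      then have "K \<subseteq> V - {w}" using KV by blast
      then have "convex hull K \<subseteq> convex hull (V-{w})" by (rule hull_mono)
      then show ?thesis using PW w by blast
    qed
  qed
  have hfacet: "is_facet V k (convex hull K) \<longleftrightarrow> card K = k + 1" if KV: "K \<subseteq> V" for K k
  proof
    assume "is_facet V k (convex hull K)"
    then obtain K' where "K' \<subseteq> V" "card K' = k + 1" "convex hull K = convex hull K'"
      unfolding is_facet_def by blast
    then show "card K = k + 1" using hull_inj[OF indep KV] by metis
  qed (use KV in \<open>auto simp: is_facet_def\<close>)
  have injH: "inj_on (\<lambda>K. convex hull K) (Pow V)"
    by (rule inj_onI) (use hull_inj[OF indep] in blast)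
  define SC where "SC = {S. \<exists>K. K \<subseteq> V \<and> S = convex hull K \<and> S \<subseteq> P}"
  have sc: "simplicial_complex SC"
    unfolding simplicial_complex_def
  proof (intro conjI allI impI ballI)
    show "finite SC"
      by (rule finite_subset[of _ "(\<lambda>K. convex hull K) ` Pow V"]) (auto simp: SC_def finV)
  next
    fix S assume "S \<in> SC"
    then obtain K where K: "K \<subseteq> V" "S = convex hull K" by (auto simp: SC_def)
    have "\<not> affine_dependent K" using K indep affine_dependent_subset by blast
    then show "\<exists>n. n simplex S" unfolding simplex_def using K
      by (intro exI[of _ "int (card K) - 1"]) auto
  next
    fix F S assume h: "S \<in> SC \<and> F face_of S"
    then obtain K where K: "K \<subseteq> V" "S = convex hull K" "S \<subseteq> P" by (auto simp: SC_def)
    have "\<not> affine_dependent K" using K indep affine_dependent_subset by blast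
    then obtain c where c: "c \<subseteq> K" "F = convex hull c"
      using h K face_of_convex_hull_affine_independent by blast
    have "convex hull c \<subseteq> convex hull K" using c hull_mono by blast
    then show "F \<in> SC" using c K unfolding SC_def by blast
  next
    fix S S' assume h: "S \<in> SC \<and> S' \<in> SC"
    then obtain K where K: "K \<subseteq> V" "S = convex hull K" by (auto simp: SC_def)
    obtain K' where K': "K' \<subseteq> V" "S' = convex hull K'" using h by (auto simp: SC_def)
    have "\<not> affine_dependent (K \<union> K')" using K K' indep affine_dependent_subset by (metis Un_subset_iff)
    then have "S \<inter> S' = convex hull (K \<inter> K')" using K K' convex_hull_Int by blast
    moreover have "\<not> affine_dependent K" using K indep affine_dependent_subset by blast
    ultimately show "(S \<inter> S') face_of S"
      using K face_of_convex_hull_affine_independent by blast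
  qed
  have un: "\<Union>SC = P"
  proof
    show "\<Union>SC \<subseteq> P" by (auto simp: SC_def)
  next
    show "P \<subseteq> \<Union>SC"
    proof
      fix x assume "x \<in> P"
      then obtain F where F: "F \<in> \<F>" "x \<in> F" using P_def by blast
      then obtain v where "v \<in> V" "F = convex hull (V - {v})" using faces is_face_def by blast
      then have "F \<in> SC" using F unfolding SC_def P_def by blast
      then show "x \<in> \<Union>SC" using F by blast
    qed
  qed
  have count: "int (card {S. is_facet V k S \<and> S \<subseteq> P}) =
               (\<Sum>r=1..m. (-1)^(r-1) * int ((l + 1 - r) choose (k + 1)) * int (m choose r))" for k
  proof -
    define A where "A w = {K. K \<subseteq> V \<and> card K = k+1 \<and> w \<notin> K}" for w
    have e1: "{S. is_facet V k S \<and> S \<subseteq> P} = (\<lambda>K. convex hull K) ` (\<Union>(A ` W))"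
    proof (rule set_eqI, rule iffI)
      fix S assume "S \<in> {S. is_facet V k S \<and> S \<subseteq> P}"
      then obtain K where K: "K \<subseteq> V" "card K = k + 1" "S = convex hull K" "S \<subseteq> P"
        unfolding is_facet_def by blast
      then have "K \<noteq> {}" by auto
      then have "\<not> W \<subseteq> K" using key[OF K(1)] K(3,4) by blast
      then obtain w where "w \<in> W" "w \<notin> K" by blast
      then show "S \<in> (\<lambda>K. convex hull K) ` (\<Union>(A ` W))" using K A_def by blast
    next
      fix S assume "S \<in> (\<lambda>K. convex hull K) ` (\<Union>(A ` W))"
      then obtain K w where K: "w \<in> W" "K \<subseteq> V" "card K = k+1" "w \<notin> K" "S = convex hull K"
        unfolding A_def by blast
      then have "S \<subseteq> P" using key[OF K(2)] K(4,5) by blast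
      then show "S \<in> {S. is_facet V k S \<and> S \<subseteq> P}" using hfacet[OF K(2)] K(3,5) \<open>S \<subseteq> P\<close> by simp
    qed
    have "inj_on (\<lambda>K. convex hull K) (\<Union>(A ` W))"
      by (rule inj_on_subset[OF injH]) (auto simp: A_def)
    then have "card {S. is_facet V k S \<and> S \<subseteq> P} = card (\<Union>(A ` W))"
      using e1 card_image by metis
    moreover have finA: "finite (A w)" for w
      by (rule finite_subset[of _ "Pow V"]) (auto simp: A_def finV)
    ultimately have "int (card {S. is_facet V k S \<and> S \<subseteq> P})
        = (\<Sum>B | B \<subseteq> W \<and> B \<noteq> {}. (- 1) ^ (card B + 1) * int (card (\<Inter>(A ` B))))"
      using int_card_UNION_indexed[OF finW, of A] by simp
    also have "\<dots> = (\<Sum>B | B \<subseteq> W \<and> B \<noteq> {}. (- 1) ^ (card B + 1) * int ((l + 1 - card B) choose (k+1)))"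
    proof (rule sum.cong[OF refl])
      fix B assume "B \<in> {B. B \<subseteq> W \<and> B \<noteq> {}}"
      then have B: "B \<subseteq> W" "B \<noteq> {}" by auto
      have "\<Inter>(A ` B) = {K. K \<subseteq> V - B \<and> card K = k+1}"
        using B unfolding A_def by auto
      moreover have "card (V - B) = l + 1 - card B"
        using B WV cardV finW by (metis card_Diff_subset finite_subset subset_trans)
      ultimately have "card (\<Inter>(A ` B)) = (l + 1 - card B) choose (k+1)"
        using n_subsets[of "V - B" "k+1"] finV by simp
      then show "(- 1) ^ (card B + 1) * int (card (\<Inter>(A ` B))) =
          (- 1) ^ (card B + 1) * int ((l + 1 - card B) choose (k+1))" by simp
    qed
    also have "\<dots> = (\<Sum>r=1..m. int (m choose r) * ((- 1) ^ (r + 1) * int ((l + 1 - r) choose (k+1))))"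
      using sum_by_card[OF finW, of "\<lambda>r. (- 1) ^ (r + 1) * int ((l + 1 - r) choose (k+1))"] cardW
      by simp
    also have "\<dots> = (\<Sum>r=1..m. (-1)^(r-1) * int ((l + 1 - r) choose (k + 1)) * int (m choose r))"
    proof (rule sum.cong[OF refl])
      fix r assume "r \<in> {1..m}"
      then obtain q where "r = Suc q" by (cases r) auto
      then show "int (m choose r) * ((- 1) ^ (r + 1) * int ((l + 1 - r) choose (k+1))) =
          (-1)^(r-1) * int ((l + 1 - r) choose (k + 1)) * int (m choose r)" by simp
    qed
    finally show ?thesis .
  qed
  have Cchar: "\<C> = (\<lambda>K. convex hull K) ` {K. W \<subseteq> K \<and> K \<subseteq> V}"
  proof (rule set_eqI, rule iffI)
    fix S assume "S \<in> \<C>"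
    then obtain k K where K: "K \<subseteq> V" "card K = k + 1" "S = convex hull K" "\<not> S \<subseteq> P"
      unfolding \<C>_def is_facet_def by blast
    then have "W \<subseteq> K" using key[OF K(1)] K by auto
    then show "S \<in> (\<lambda>K. convex hull K) ` {K. W \<subseteq> K \<and> K \<subseteq> V}" using K by blast
  next
    fix S assume "S \<in> (\<lambda>K. convex hull K) ` {K. W \<subseteq> K \<and> K \<subseteq> V}"
    then obtain K where K: "W \<subseteq> K" "K \<subseteq> V" "S = convex hull K" by blast
    then have "K \<noteq> {}" using Wne by blast
    then have "card K \<noteq> 0" using K finV finite_subset card_0_eq by metis
    then have "card K = (card K - 1) + 1" by simp
    then have "is_facet V (card K - 1) S" using hfacet[OF K(2), of "card K - 1"] K(3) by simp
    moreover have "\<not> S \<subseteq> P" using key[OF K(2)] K \<open>K \<noteq> {}\<close> by blast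
    ultimately show "S \<in> \<C>" unfolding \<C>_def by blast
  qed
  have cardVW: "card (V - W) = l + 1 - m" using cardV cardW WV finW card_Diff_subset by metis
  have ii1: "\<forall>S\<in>\<C>. \<forall>k. is_facet V k S \<longrightarrow> l - k \<le> l + 1 - m"
  proof (intro ballI allI impI)
    fix S k assume "S \<in> \<C>" "is_facet V k S"
    then obtain K where K: "W \<subseteq> K" "K \<subseteq> V" "S = convex hull K" "is_facet V k S" using Cchar by blast
    then have "card K = k + 1" using hfacet[OF K(2)] K(3,4) by simp
    moreover have "card W \<le> card K" using K finV finite_subset card_mono by metis
    ultimately have "m \<le> k + 1" using cardW by simp
    then show "l - k \<le> l + 1 - m" by simp
  qed
  have ii2: "card {S\<in>\<C>. \<exists>k. is_facet V k S \<and> k + j = l} = (l + 1 - m) choose j" for j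
  proof -
    have e: "{S\<in>\<C>. \<exists>k. is_facet V k S \<and> k + j = l} =
        (\<lambda>K. convex hull K) ` {K. W \<subseteq> K \<and> K \<subseteq> V \<and> card K + j = l + 1}"
    proof (rule set_eqI, rule iffI)
      fix S assume "S \<in> {S\<in>\<C>. \<exists>k. is_facet V k S \<and> k + j = l}"
      then obtain K k where K: "W \<subseteq> K" "K \<subseteq> V" "S = convex hull K" "is_facet V k S" "k + j = l"
        using Cchar by blast
      then have "card K = k + 1" using hfacet[OF K(2)] K(3,4) by simp
      then show "S \<in> (\<lambda>K. convex hull K) ` {K. W \<subseteq> K \<and> K \<subseteq> V \<and> card K + j = l + 1}"
        using K by auto
    next
      fix S assume "S \<in> (\<lambda>K. convex hull K) ` {K. W \<subseteq> K \<and> K \<subseteq> V \<and> card K + j = l + 1}"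
      then obtain K where K: "W \<subseteq> K" "K \<subseteq> V" "S = convex hull K" "card K + j = l + 1" by blast
      then have "K \<noteq> {}" using Wne by blast
      then have "card K \<noteq> 0" using K finV finite_subset card_0_eq by metis
      then have "card K = (card K - 1) + 1" by simp
      then have "is_facet V (card K - 1) S" using hfacet[OF K(2), of "card K - 1"] K(3) by simp
      moreover have "S \<in> \<C>" using Cchar K by blast
      moreover have "(card K - 1) + j = l" using K \<open>card K \<noteq> 0\<close> by simp
      ultimately show "S \<in> {S\<in>\<C>. \<exists>k. is_facet V k S \<and> k + j = l}" by blast
    qed
    have "{K. W \<subseteq> K \<and> K \<subseteq> V \<and> card K + j = l + 1} \<subseteq> Pow V" by blast
    then have "inj_on (\<lambda>K. convex hull K) {K. W \<subseteq> K \<and> K \<subseteq> V \<and> card K + j = l + 1}"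
      by (rule inj_on_subset[OF injH])
    then have "card {S\<in>\<C>. \<exists>k. is_facet V k S \<and> k + j = l} = card {K. W \<subseteq> K \<and> K \<subseteq> V \<and> card K + j = l + 1}"
      unfolding e by (rule card_image)
    also have "\<dots> = card {L. L \<subseteq> V - W \<and> card W + card L + j = l + 1}"
      using supset_card[OF finV WV, of "\<lambda>c. c + j = l + 1"] by simp
    also have "\<dots> = (l + 1 - m) choose j"
    proof (cases "j \<le> l + 1 - m")
      case True
      have "{L. L \<subseteq> V - W \<and> card W + card L + j = l + 1} = {L. L \<subseteq> V - W \<and> card L = (l + 1 - m) - j}"
        using True cardW card_mono[OF finV WV] cardV by auto
      then show ?thesis using n_subsets[of "V - W"] finV cardVW binomial_symmetric[OF True] by simp
    next
      case False
      have emp: "{L. L \<subseteq> V - W \<and> card W + card L + j = l + 1} = {}"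
        using False cardW by auto
      show ?thesis unfolding emp using False by (simp add: binomial_eq_0)
    qed
    finally show ?thesis .
  qed
  have ii3: "card \<C> = 2 ^ (l + 1 - m)"
  proof -
    have "{K. W \<subseteq> K \<and> K \<subseteq> V} \<subseteq> Pow V" by blast
    then have "inj_on (\<lambda>K. convex hull K) {K. W \<subseteq> K \<and> K \<subseteq> V}"
      by (rule inj_on_subset[OF injH])
    then have "card \<C> = card {K. W \<subseteq> K \<and> K \<subseteq> V}"
      unfolding Cchar by (rule card_image)
    also have "\<dots> = card {K. W \<subseteq> K \<and> K \<subseteq> V \<and> (\<lambda>_. True) (card K)}" by simp
    also have "\<dots> = card {L. L \<subseteq> V - W}"
      using supset_card[OF finV WV, of "\<lambda>_. True"] by simp
    also have "\<dots> = card (Pow (V - W))" by (simp add: Pow_def)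
    also have "\<dots> = 2 ^ (l + 1 - m)" using card_Pow finV cardVW by (metis finite_Diff)
    finally show ?thesis .
  qed
  show ?thesis
    unfolding SC_def[symmetric]
    apply (intro conjI)
         apply (rule sc)
        apply (rule un)
       apply (rule allI, rule count)
      apply (rule ii1)
     apply (rule allI, rule ii2)
    apply (rule ii3)
    done
qed

end
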